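(* Let $G=(V,E)$ be a cograph and let $\sigma:V\to S$ be an hc-coloring of $G$. Then $|S|=\chi(G)$.
   Context: All graphs are finite, simple and undirected. A (proper vertex) coloring of $G=(V,E)$ is a surjective map $\sigma:V\to S$ such that $xy\in E$ implies $\sigma(x)\neq\sigma(y)$; $\chi(G)$ is the chromatic number. A cograph is a graph that is $K_1$, or a disjoint union of cographs, or a join of cographs. A cotree $(T,t)$ of a cograph $G$ is a rooted tree $T$ whose leaf set is $V$, together with a labeling $t:V^0(T)\to\{0,1\}$ of its inner vertices, such that for every inner vertex $u$ the induced subgraph $G(u):=G[L(T(u))]$ (where $L(T(u))$ is the set of leaves descending from $u$) is the disjoint union (if $t(u)=0$) or the join (if $t(u)=1$) of the graphs $G(v)$, $v$ a child of $u$. The cotree is binary if every inner vertex has exactly two children. A coloring $\sigma$ of $G$ is an hc-coloring with respect to a binary cotree $(T,t)$ if for every inner vertex $u$ of $T$ with children $v_1,v_2$: if $t(u)=1$ then $\sigma(L(T(v_1)))\cap\sigma(L(T(v_2)))=\emptyset$, and if $t(u)=0$ then $\sigma(L(T(v_1)))\cap\sigma(L(T(v_2)))\in\{\sigma(L(T(v_1))),\sigma(L(T(v_2)))\}$ (i.e., one of the two color sets contains the other). A coloring $\sigma$ of a cograph $G$ is an hc-coloring of $G$ if there exists a binary cotree $(T,t)$ of $G$ such that $\sigma$ is an hc-coloring with respect to $(T,t)$. *)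

theory Defs
  imports Main
begin

definition simple_graph :: "'a set \<Rightarrow> 'a set set \<Rightarrow> bool" where
  "simple_graph V E \<longleftrightarrow> finite V \<and> (\<forall>e\<in>E. \<exists>x y. e = {x, y} \<and> x \<noteq> y \<and> x \<in> V \<and> y \<in> V)"

inductive cograph :: "'a set \<Rightarrow> 'a set set \<Rightarrow> bool" where
  K1: "cograph {v} {}"
| union: "\<lbrakk>cograph V1 E1; cograph V2 E2; V1 \<inter> V2 = {}\<rbrakk> \<Longrightarrow> cograph (V1 \<union> V2) (E1 \<union> E2)"
| join: "\<lbrakk>cograph V1 E1; cograph V2 E2; V1 \<inter> V2 = {}\<rbrakk> \<Longrightarrow>
     cograph (V1 \<union> V2) (E1 \<union> E2 \<union> {{x, y} | x y. x \<in> V1 \<and> y \<in> V2})"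

definition proper_coloring :: "'a set \<Rightarrow> 'a set set \<Rightarrow> ('a \<Rightarrow> 'c) \<Rightarrow> bool" where
  "proper_coloring V E \<sigma> \<longleftrightarrow> (\<forall>x\<in>V. \<forall>y\<in>V. {x, y} \<in> E \<longrightarrow> \<sigma> x \<noteq> \<sigma> y)"

definition coloring :: "'a set \<Rightarrow> 'a set set \<Rightarrow> ('a \<Rightarrow> 'c) \<Rightarrow> 'c set \<Rightarrow> bool" where
  "coloring V E \<sigma> S \<longleftrightarrow> \<sigma> ` V = S \<and> proper_coloring V E \<sigma>"

definition chromatic_number :: "'a set \<Rightarrow> 'a set set \<Rightarrow> nat" where
  "chromatic_number V E = (LEAST k. \<exists>(\<sigma>::'a \<Rightarrow> nat) S. coloring V E \<sigma> S \<and> card S = k)"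

text \<open>Binary cotrees: leaves are vertices, inner vertices carry a label (True = 1 = join,
  False = 0 = disjoint union) and have exactly two children.\<close>

datatype 'a bcotree = Leaf 'a | Inner bool "'a bcotree" "'a bcotree"

primrec leaves :: "'a bcotree \<Rightarrow> 'a set" where
  "leaves (Leaf v) = {v}"
| "leaves (Inner t l r) = leaves l \<union> leaves r"

definition induced_edges :: "'a set set \<Rightarrow> 'a set \<Rightarrow> 'a set set" where
  "induced_edges E A = {e \<in> E. e \<subseteq> A}"

primrec is_bcotree_of :: "'a bcotree \<Rightarrow> 'a set \<Rightarrow> 'a set set \<Rightarrow> bool" where
  "is_bcotree_of (Leaf v) V E \<longleftrightarrow> V = {v} \<and> E = {}"
| "is_bcotree_of (Inner t l r) V E \<longleftrightarrow>
     V = leaves l \<union> leaves r \<and> leaves l \<inter> leaves r = {} \<and>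
     is_bcotree_of l (leaves l) (induced_edges E (leaves l)) \<and>
     is_bcotree_of r (leaves r) (induced_edges E (leaves r)) \<and>
     (\<forall>x\<in>leaves l. \<forall>y\<in>leaves r. ({x, y} \<in> E \<longleftrightarrow> t))"

primrec hc_wrt :: "'a bcotree \<Rightarrow> ('a \<Rightarrow> 'c) \<Rightarrow> bool" where
  "hc_wrt (Leaf v) \<sigma> \<longleftrightarrow> True"
| "hc_wrt (Inner t l r) \<sigma> \<longleftrightarrow> hc_wrt l \<sigma> \<and> hc_wrt r \<sigma> \<and>
     (if t then \<sigma> ` leaves l \<inter> \<sigma> ` leaves r = {}
      else \<sigma> ` leaves l \<inter> \<sigma> ` leaves r \<in> {\<sigma> ` leaves l, \<sigma> ` leaves r})"

definition hc_coloring :: "'a set \<Rightarrow> 'a set set \<Rightarrow> ('a \<Rightarrow> 'c) \<Rightarrow> 'c set \<Rightarrow> bool" where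
  "hc_coloring V E \<sigma> S \<longleftrightarrow> coloring V E \<sigma> S \<and>
     (\<exists>T. is_bcotree_of T V E \<and> hc_wrt T \<sigma>)"

end

theory Submission
  imports Defs
begin

lemma clique_exists:
  "is_bcotree_of T V E \<Longrightarrow> hc_wrt T \<sigma> \<Longrightarrow>
   \<exists>K. K \<subseteq> V \<and> (\<forall>x\<in>K. \<forall>y\<in>K. x \<noteq> y \<longrightarrow> {x, y} \<in> E) \<and> card K = card (\<sigma> ` V)
       \<and> finite K"
proof (induction T arbitrary: V E)
  case (Leaf v)
  then show ?case by (intro exI[of _ "{v}"]) auto
next
  case (Inner t l r)
  have fl: "finite (leaves l)" and fr: "finite (leaves r)"
    by (induction l; simp) (induction r; simp)
  from Inner.prems have V: "V = leaves l \<union> leaves r" and D: "leaves l \<inter> leaves r = {}"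
    and cross: "\<forall>x\<in>leaves l. \<forall>y\<in>leaves r. ({x, y} \<in> E \<longleftrightarrow> t)" by auto
  from Inner.prems Inner.IH(1)[of "leaves l" "induced_edges E (leaves l)"]
  obtain Kl where Kl: "Kl \<subseteq> leaves l" "\<forall>x\<in>Kl. \<forall>y\<in>Kl. x \<noteq> y \<longrightarrow> {x, y} \<in> E"
    "card Kl = card (\<sigma> ` leaves l)" "finite Kl"
    by (auto simp: induced_edges_def)
  from Inner.prems Inner.IH(2)[of "leaves r" "induced_edges E (leaves r)"]
  obtain Kr where Kr: "Kr \<subseteq> leaves r" "\<forall>x\<in>Kr. \<forall>y\<in>Kr. x \<noteq> y \<longrightarrow> {x, y} \<in> E"
    "card Kr = card (\<sigma> ` leaves r)" "finite Kr"
    by (auto simp: induced_edges_def)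
  show ?case
  proof (cases t)
    case True
    with Inner.prems have dc: "\<sigma> ` leaves l \<inter> \<sigma> ` leaves r = {}" by simp
    have "card (Kl \<union> Kr) = card Kl + card Kr"
      using Kl Kr D by (intro card_Un_disjoint) auto
    also have "\<dots> = card (\<sigma> ` V)"
      using Kl(3) Kr(3) dc fl fr V by (simp add: image_Un card_Un_disjoint)
    finally have c: "card (Kl \<union> Kr) = card (\<sigma> ` V)" .
    have cl: "\<forall>x\<in>Kl \<union> Kr. \<forall>y\<in>Kl \<union> Kr. x \<noteq> y \<longrightarrow> {x, y} \<in> E"
    proof (intro ballI impI)
      fix x y assume "x \<in> Kl \<union> Kr" "y \<in> Kl \<union> Kr" "x \<noteq> y"
      then show "{x, y} \<in> E"
        using Kl Kr cross True by (metis Un_iff insert_commute subsetD)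
    qed
    show ?thesis using c cl Kl Kr V by (intro exI[of _ "Kl \<union> Kr"]) auto
  next
    case False
    with Inner.prems have "\<sigma> ` leaves l \<inter> \<sigma> ` leaves r \<in> {\<sigma> ` leaves l, \<sigma> ` leaves r}" by simp
    then have "\<sigma> ` V = \<sigma> ` leaves r \<or> \<sigma> ` V = \<sigma> ` leaves l" using V by auto
    then show ?thesis
    proof
      assume "\<sigma> ` V = \<sigma> ` leaves r" then show ?thesis using Kr V by (intro exI[of _ Kr]) auto
    next
      assume "\<sigma> ` V = \<sigma> ` leaves l" then show ?thesis using Kl V by (intro exI[of _ Kl]) auto
    qed
  qed
qed

theorem theorem3:
  fixes V :: "'a set" and E :: "'a set set" and \<sigma> :: "'a \<Rightarrow> 'c" and S :: "'c set"
  assumes "simple_graph V E"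
    and "cograph V E"
    and "hc_coloring V E \<sigma> S"
  shows "card S = chromatic_number V E"
proof -
  have fV: "finite V" using assms(1) by (simp add: simple_graph_def)
  from assms(3) obtain T where T: "is_bcotree_of T V E" "hc_wrt T \<sigma>"
    and S: "\<sigma> ` V = S" and pr: "proper_coloring V E \<sigma>"
    by (auto simp: hc_coloring_def coloring_def)
  from clique_exists[OF T] obtain K where K: "K \<subseteq> V"
    "\<forall>x\<in>K. \<forall>y\<in>K. x \<noteq> y \<longrightarrow> {x, y} \<in> E" "card K = card S" "finite K"
    using S by auto
  have fS: "finite S" using S fV by auto
  obtain h where h: "bij_betw h S {0..<card S}" using ex_bij_betw_finite_nat[OF fS] by blast
  have ex: "\<exists>(\<tau>::'a \<Rightarrow> nat) S'. coloring V E \<tau> S' \<and> card S' = card S"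
  proof (intro exI conjI)
    show "coloring V E (h \<circ> \<sigma>) {0..<card S}"
      unfolding coloring_def proper_coloring_def
    proof
      show "(h \<circ> \<sigma>) ` V = {0..<card S}" using h S unfolding bij_betw_def by (metis image_comp)
      show "\<forall>x\<in>V. \<forall>y\<in>V. {x, y} \<in> E \<longrightarrow> (h \<circ> \<sigma>) x \<noteq> (h \<circ> \<sigma>) y"
        using pr h S unfolding proper_coloring_def bij_betw_def inj_on_def by (simp, blast)
    qed
    show "card {0..<card S} = card S" by simp
  qed
  have lb: "card S \<le> k" if "\<exists>(\<tau>::'a \<Rightarrow> nat) S'. coloring V E \<tau> S' \<and> card S' = k" for k
  proof -
    from that obtain \<tau> :: "'a \<Rightarrow> nat" and S' where c: "coloring V E \<tau> S'" "card S' = k" by blast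
    have inj: "inj_on \<tau> K"
      using c(1) K(1,2) unfolding coloring_def proper_coloring_def inj_on_def by blast
    have "card K = card (\<tau> ` K)" using inj by (simp add: card_image)
    also have "\<dots> \<le> card S'" using c(1) K(1) fV unfolding coloring_def
      by (intro card_mono) auto
    finally show ?thesis using K(3) c(2) by simp
  qed
  show ?thesis unfolding chromatic_number_def
    by (rule Least_equality[symmetric]) (use ex lb in auto)
qed

end
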